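(* Let $A=(a_{ij})\in M_n(\mathbb{C})$ and suppose the Schur map $S_A\colon M_n(\mathbb{C})\to M_n(\mathbb{C})$, $S_A(B)=A\circ B$, is nonzero and multiplicative (i.e. $S_A(BC)=S_A(B)S_A(C)$ for all $B,C$). Then: (i) all entries of $A$ are nonzero, $A^{*}=\overline{A^{[-1]}}$, and $A$ is diagonalizable; (ii) $\|A\|\ge n$, and if $A^{*}=A$ then $\|A\|=n$; (iii) if $A=A^{*}$, then $S_A$ is numerical range preserving, i.e. $W(S_A(B))=W(B)$ for all $B\in M_n(\mathbb{C})$.
   Context: $A\circ B=(a_{ij}b_{ij})$ is the entrywise product. For a matrix $A$ with no zero entries, $A^{[-1]}=(1/a_{ij})$ is its entrywise reciprocal, and $\overline{X}$ denotes the entrywise complex conjugate; $A^*$ is the conjugate transpose. $\|A\|$ is the operator (spectral) norm of $A$ acting on $\mathbb{C}^n$. The numerical range of $B$ is $W(B)=\{\langle Bx,x\rangle : x\in\mathbb{C}^n,\ \|x\|=1\}$. *)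

theory Defs
  imports "HOL-Analysis.Analysis"
begin

text \<open>Complex n x n matrices are modelled as complex ^'n ^'n, with n = CARD('n).\<close>

definition schur_prod :: "complex^'n^'m \<Rightarrow> complex^'n^'m \<Rightarrow> complex^'n^'m" where
  "schur_prod A B = (\<chi> i j. A$i$j * B$i$j)"

definition entry_recip :: "complex^'n^'m \<Rightarrow> complex^'n^'m" where
  "entry_recip A = (\<chi> i j. 1 / A$i$j)"

definition entry_cnj :: "complex^'n^'m \<Rightarrow> complex^'n^'m" where
  "entry_cnj A = (\<chi> i j. cnj (A$i$j))"

definition conj_transpose :: "complex^'n^'m \<Rightarrow> complex^'m^'n" where
  "conj_transpose A = (\<chi> i j. cnj (A$j$i))"

definition cinner :: "complex^'n \<Rightarrow> complex^'n \<Rightarrow> complex" where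
  "cinner x y = (\<Sum>i\<in>UNIV. x$i * cnj (y$i))"

definition numerical_range :: "complex^'n^'n \<Rightarrow> complex set" where
  "numerical_range B = {cinner (B *v x) x | x. norm x = 1}"

definition op_norm :: "complex^'n^'m \<Rightarrow> real" where
  "op_norm A = onorm (\<lambda>x. A *v x)"

definition diagonalizable :: "complex^'n^'n \<Rightarrow> bool" where
  "diagonalizable A \<longleftrightarrow> (\<exists>(P::complex^'n^'n) (D::complex^'n^'n). invertible P \<and> (\<forall>i j. i \<noteq> j \<longrightarrow> D$i$j = 0)
      \<and> A = P ** D ** matrix_inv P)"

end

theory Submission imports Defs begin

definition Emat :: "'n \<Rightarrow> 'n \<Rightarrow> complex^'n^'n" where
  "Emat p q = (\<chi> i j. if i = p \<and> j = q then 1 else 0)"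

lemma ifz1: "(if P then x else 0) * (y::complex) = (if P then x * y else 0)" by simp
lemma ifz2: "(y::complex) * (if P then x else 0) = (if P then y * x else 0)" by simp

lemma Emat_mult: "Emat i k ** Emat k j = Emat i j"
  unfolding Emat_def matrix_matrix_mult_def vec_eq_iff by (auto simp: if_distrib[where f="\<lambda>x. x * _"] sum.delta cong: if_cong)

lemma key:
  fixes A :: "complex^'n^'n"
  assumes mult: "\<forall>B C. schur_prod A (B ** C) = schur_prod A B ** schur_prod A C"
  shows "A$i$j = A$i$k * A$k$j"
proof -
  have "schur_prod A (Emat i k ** Emat k j) $ i $ j = (schur_prod A (Emat i k) ** schur_prod A (Emat k j)) $ i $ j"
    using mult by simp
  then show ?thesis
    by (simp add: Emat_mult schur_prod_def Emat_def matrix_matrix_mult_def ifz1 ifz2 cong: if_cong)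
qed

lemma basic:
  fixes A :: "complex^'n^'n"
  assumes nonzero: "(\<lambda>B. schur_prod A B) \<noteq> (\<lambda>B. 0)"
    and mult: "\<forall>B C. schur_prod A (B ** C) = schur_prod A B ** schur_prod A C"
  shows "A$i$j \<noteq> 0" "A$j$i * A$i$j = 1"
proof -
  obtain B where "schur_prod A B \<noteq> 0" using nonzero by (metis ext)
  then obtain p q where pq: "A$p$q \<noteq> 0"
    by (auto simp: schur_prod_def vec_eq_iff)
  have pp: "A$p$p = 1" using key[OF mult, of p q p] pq by simp
  have all1: "A$k$k = 1" for k
  proof -
    have "A$p$k * A$k$p = 1" using key[OF mult, of p p k] pp by simp
    then have "A$k$p \<noteq> 0" by auto
    moreover have "A$k$p = A$k$k * A$k$p" using key[OF mult, of k p k] by simp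
    ultimately show ?thesis by simp
  qed
  show "A$j$i * A$i$j = 1" using key[OF mult, of j j i] all1[of j] by simp
  then show "A$i$j \<noteq> 0" by auto
qed

lemma diag_lemma:
  fixes A :: "complex^'n^'n" and u :: "'n \<Rightarrow> complex"
  assumes u0: "\<And>i. u i \<noteq> 0" and Au: "\<And>i j. A$i$j = u i / u j"
  shows "diagonalizable A"
proof -
  define j0 :: 'n where "j0 = undefined"
  define n :: complex where "n = of_nat CARD('n)"
  have n0: "n \<noteq> 0" by (simp add: n_def)
  define p :: "'n \<Rightarrow> 'n \<Rightarrow> complex" where
    "p k j = (if j = j0 then 1 else (if k = j then 1 else 0) - (if k = j0 then 1 else 0))" for k j
  define q :: "'n \<Rightarrow> 'n \<Rightarrow> complex" where
    "q i k = (if i = j0 then 1/n else (if i = k then 1 else 0) - 1/n)" for i k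
  define P :: "complex^'n^'n" where "P = (\<chi> i j. u i * p i j)"
  define Q :: "complex^'n^'n" where "Q = (\<chi> i j. q i j / u j)"
  define D :: "complex^'n^'n" where "D = (\<chi> i j. if i = j0 \<and> j = j0 then n else 0)"
  have sq: "(\<Sum>k\<in>UNIV. q i k * p k j) = (if i = j then 1 else 0)" for i j
  proof (cases "j = j0")
    case True
    then have "(\<Sum>k\<in>UNIV. q i k * p k j) = (\<Sum>k\<in>UNIV. q i k)" by (simp add: p_def)
    also have "\<dots> = (if i = j then 1 else 0)"
      using True n0 by (simp add: q_def sum_subtractf n_def)
    finally show ?thesis .
  next
    case False
    then have "(\<Sum>k\<in>UNIV. q i k * p k j) = (\<Sum>k\<in>UNIV. (if k = j then q i k else 0) - (if k = j0 then q i k else 0))"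
      by (intro sum.cong) (auto simp: p_def)
    also have "\<dots> = q i j - q i j0" by (simp add: sum_subtractf)
    also have "\<dots> = (if i = j then 1 else 0)" using False by (auto simp: q_def)
    finally show ?thesis .
  qed
  have QP: "Q ** P = mat 1"
  proof -
    have "(Q ** P)$i$j = (\<Sum>k\<in>UNIV. q i k * p k j)" for i j
      unfolding matrix_matrix_mult_def Q_def P_def using u0 by (auto intro!: sum.cong)
    then show ?thesis using sq by (simp add: vec_eq_iff mat_def)
  qed
  then have PQ: "P ** Q = mat 1" using matrix_left_right_inverse by blast
  have invP: "invertible P" using PQ QP invertible_def by blast
  have mi: "matrix_inv P = Q"
  proof -
    have "P ** matrix_inv P = mat 1 \<and> matrix_inv P ** P = mat 1"
      unfolding matrix_inv_def by (rule someI[of _ Q]) (use PQ QP in blast)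
    then have "matrix_inv P = (Q ** P) ** matrix_inv P" using QP by simp
    also have "\<dots> = Q" using \<open>P ** matrix_inv P = mat 1 \<and> _\<close> by (simp add: matrix_mul_assoc[symmetric])
    finally show ?thesis .
  qed
  have "P ** D ** Q = A"
  proof -
    have PD: "(P ** D)$i$k = (if k = j0 then u i * n else 0)" for i k
    proof -
      have "(P ** D)$i$k = (\<Sum>l\<in>UNIV. u i * p i l * (if l = j0 \<and> k = j0 then n else 0))"
        unfolding matrix_matrix_mult_def P_def D_def by simp
      also have "\<dots> = (\<Sum>l\<in>UNIV. if l = j0 then (if k = j0 then u i * p i l * n else 0) else 0)"
        by (intro sum.cong) auto
      also have "\<dots> = (if k = j0 then u i * n else 0)" by (simp add: p_def)
      finally show ?thesis .
    qed
    have "(P ** D ** Q)$i$j = A$i$j" for i j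
    proof -
      have "(P ** D ** Q)$i$j = (\<Sum>k\<in>UNIV. (if k = j0 then u i * n else 0) * Q$k$j)"
        unfolding matrix_matrix_mult_def[of "P ** D"] using PD by simp
      also have "\<dots> = u i * n * Q$j0$j" by (simp add: if_distrib[where f="\<lambda>x. x * _"] cong: if_cong)
      also have "\<dots> = A$i$j" using n0 by (simp add: Q_def q_def Au)
      finally show ?thesis .
    qed
    then show ?thesis by (simp add: vec_eq_iff)
  qed
  then show ?thesis unfolding diagonalizable_def
    using invP mi by (intro exI[of _ P] exI[of _ D]) (auto simp: D_def)
qed

lemma Av_lemma:
  fixes A :: "complex^'n^'n" and u :: "'n \<Rightarrow> complex"
  assumes Au: "\<And>i j. A$i$j = u i / u j"
  shows "A *v x = (\<chi> i. u i * (\<Sum>j\<in>UNIV. x$j / u j))"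
  by (simp add: matrix_vector_mult_def Au vec_eq_iff sum_distrib_left)

lemma norm_scal:
  fixes u :: "'n::finite \<Rightarrow> complex"
  shows "norm ((\<chi> i. u i * t) :: complex^'n) = norm ((\<chi> i. u i) :: complex^'n) * cmod t"
  unfolding norm_vec_def using L2_set_right_distrib[of "cmod t" "\<lambda>i. cmod (u i)" UNIV]
  by (simp add: norm_mult mult.commute)

lemma norm_sq_vec: "(norm (x::complex^'n))^2 = (\<Sum>j\<in>UNIV. (cmod (x$j))^2)"
  unfolding norm_vec_def L2_set_def by (simp add: sum_nonneg)

lemma norm_ge:
  fixes A :: "complex^'n^'n" and u :: "'n \<Rightarrow> complex"
  assumes u0: "\<And>i. u i \<noteq> 0" and Au: "\<And>i j. A$i$j = u i / u j"
  shows "op_norm A \<ge> real CARD('n)"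
proof -
  define v :: "complex^'n" where "v = (\<chi> j. 1 / cnj (u j))"
  define U :: "complex^'n" where "U = (\<chi> j. u j)"
  have vj: "cmod (v$j) = 1 / cmod (u j)" for j by (simp add: v_def norm_divide)
  have "v \<noteq> 0" using u0 by (auto simp: v_def vec_eq_iff) 
  then have vpos: "norm v > 0" by simp
  have t: "(\<Sum>j\<in>UNIV. v$j / u j) = of_real ((norm v)^2)"
  proof -
    have "(\<Sum>j\<in>UNIV. v$j / u j) = (\<Sum>j\<in>UNIV. of_real ((cmod (v$j))^2))"
    proof (intro sum.cong refl)
      fix j
      have "v$j / u j = 1 / (u j * cnj (u j))" by (simp add: v_def mult.commute)
      also have "\<dots> = 1 / of_real ((cmod (u j))^2)" using complex_norm_square[of "u j"] by simp
      also have "\<dots> = of_real ((cmod (v$j))^2)" by (simp add: vj power_divide)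
      finally show "v$j / u j = of_real ((cmod (v$j))^2)" .
    qed
    then show ?thesis by (simp add: norm_sq_vec)
  qed
  have Av: "norm (A *v v) = norm U * (norm v)^2"
    unfolding Av_lemma[OF Au] t U_def by (subst norm_scal) (simp del: of_real_power add: of_real_power[symmetric] norm_power)
  have cs: "real CARD('n) \<le> norm U * norm v"
  proof -
    have "real CARD('n) = (\<Sum>j\<in>UNIV. \<bar>cmod (u j)\<bar> * \<bar>cmod (v$j)\<bar>)"
      using u0 by (simp add: vj)
    also have "\<dots> \<le> L2_set (\<lambda>j. cmod (u j)) UNIV * L2_set (\<lambda>j. cmod (v$j)) UNIV"
      by (rule L2_set_mult_ineq)
    also have "\<dots> = norm U * norm v" by (simp add: norm_vec_def U_def)
    finally show ?thesis .
  qed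
  have "norm (A *v v) \<le> op_norm A * norm v"
    unfolding op_norm_def by (rule onorm) simp
  then have "norm U * norm v * norm v \<le> op_norm A * norm v" using Av by (simp add: power2_eq_square)
  then have "norm U * norm v \<le> op_norm A" using vpos by simp
  then show ?thesis using cs by linarith
qed

lemma norm_le:
  fixes A :: "complex^'n^'n" and u :: "'n \<Rightarrow> complex"
  assumes u1: "\<And>i. cmod (u i) = 1" and Au: "\<And>i j. A$i$j = u i / u j"
  shows "op_norm A \<le> real CARD('n)"
  unfolding op_norm_def
proof (rule onorm_bound)
  show "0 \<le> real CARD('n)" by simp
  fix x :: "complex^'n"
  have U: "norm ((\<chi> j. u j) :: complex^'n) = sqrt (real CARD('n))"
    by (simp add: norm_vec_def u1 L2_set_constant)
  have "cmod (\<Sum>j\<in>UNIV. x$j / u j) \<le> (\<Sum>j\<in>UNIV. cmod (x$j / u j))" by (rule norm_sum)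
  also have "\<dots> = (\<Sum>j\<in>UNIV. \<bar>cmod (x$j)\<bar> * \<bar>1\<bar>)" by (simp add: norm_divide u1)
  also have "\<dots> \<le> L2_set (\<lambda>j. cmod (x$j)) UNIV * L2_set (\<lambda>j::'n. 1) UNIV"
    using L2_set_mult_ineq[of "\<lambda>j. cmod (x$j)" "\<lambda>j::'n. 1" UNIV] by simp
  also have "\<dots> = norm x * sqrt (real CARD('n))" by (simp add: norm_vec_def L2_set_constant)
  finally have t: "cmod (\<Sum>j\<in>UNIV. x$j / u j) \<le> norm x * sqrt (real CARD('n))" .
  have "norm (A *v x) = sqrt (real CARD('n)) * cmod (\<Sum>j\<in>UNIV. x$j / u j)"
    unfolding Av_lemma[OF Au] by (subst norm_scal) (simp add: U)
  also have "\<dots> \<le> sqrt (real CARD('n)) * (norm x * sqrt (real CARD('n)))"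
    by (rule mult_left_mono[OF t]) simp
  also have "\<dots> = real CARD('n) * norm x" by (simp add: mult_ac)
  finally show "norm (A *v x) \<le> real CARD('n) * norm x" .
qed

lemma nr_lemma:
  fixes A :: "complex^'n^'n" and u :: "'n \<Rightarrow> complex"
  assumes u1: "\<And>i. cmod (u i) = 1" and Au: "\<And>i j. A$i$j = u i / u j"
  shows "numerical_range (schur_prod A B) = numerical_range B"
proof -
  have uc: "cnj (u j) * u j = 1" for j
    using complex_norm_square[of "u j"] u1[of j] by (simp add: mult.commute)
  have Au': "A$i$j = u i * cnj (u j)" for i j
  proof -
    have "u j \<noteq> 0" using u1[of j] by auto
    then have "1 / u j = cnj (u j)" using uc[of j] by (simp add: field_simps)
    moreover have "u i / u j = u i * (1 / u j)" by simp
    ultimately show ?thesis by (simp add: Au)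
  qed
  define T :: "complex^'n \<Rightarrow> complex^'n" where "T x = (\<chi> j. cnj (u j) * x$j)" for x
  have nT: "norm (T x) = norm x" for x
    unfolding norm_vec_def T_def by (simp add: norm_mult u1)
  have cT: "cinner (schur_prod A B *v x) x = cinner (B *v T x) (T x)" for x
  proof -
    have "cinner (schur_prod A B *v x) x = (\<Sum>i\<in>UNIV. \<Sum>j\<in>UNIV. u i * cnj (u j) * B$i$j * x$j * cnj (x$i))"
      unfolding cinner_def matrix_vector_mult_def schur_prod_def Au' by (simp add: sum_distrib_right)
    also have "\<dots> = (\<Sum>i\<in>UNIV. \<Sum>j\<in>UNIV. B$i$j * (cnj (u j) * x$j) * cnj (cnj (u i) * x$i))"
      by (intro sum.cong refl) (simp add: mult_ac)
    also have "\<dots> = cinner (B *v T x) (T x)"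
      unfolding cinner_def matrix_vector_mult_def T_def
      by (simp add: sum_distrib_right)
    finally show ?thesis .
  qed
  show ?thesis
  proof
    show "numerical_range (schur_prod A B) \<subseteq> numerical_range B"
      unfolding numerical_range_def using cT nT by fastforce
  next
    show "numerical_range B \<subseteq> numerical_range (schur_prod A B)"
    proof
      fix z assume "z \<in> numerical_range B"
      then obtain y where y: "z = cinner (B *v y) y" "norm y = 1" unfolding numerical_range_def by blast
      define x where "x = (\<chi> j. u j * y$j)"
      have "T x = y" unfolding T_def x_def by (simp add: vec_eq_iff mult.assoc[symmetric] uc)
      then have "z = cinner (schur_prod A B *v x) x" "norm x = 1" using cT[of x] nT[of x] y by auto
      then show "z \<in> numerical_range (schur_prod A B)" unfolding numerical_range_def by blast
    qed
  qed
qed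

theorem corollary2p3:
  fixes A :: "complex^'n^'n"
  assumes nonzero: "(\<lambda>B. schur_prod A B) \<noteq> (\<lambda>B. 0)"
    and mult: "\<forall>B C. schur_prod A (B ** C) = schur_prod A B ** schur_prod A C"
  shows "((\<forall>i j. A$i$j \<noteq> 0) \<and> conj_transpose A = entry_cnj (entry_recip A) \<and> diagonalizable A)
    \<and> (op_norm A \<ge> real CARD('n) \<and> (conj_transpose A = A \<longrightarrow> op_norm A = real CARD('n)))
    \<and> (conj_transpose A = A \<longrightarrow> (\<forall>B. numerical_range (schur_prod A B) = numerical_range B))"
proof -
  note nz = basic(1)[OF nonzero mult] and inv = basic(2)[OF nonzero mult]
  have rec: "A$j$i = 1 / A$i$j" for i j using inv[of j i] nz[of i j] by (simp add: field_simps)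
  define j0 :: 'n where "j0 = undefined"
  define u where "u i = A$i$j0" for i
  have u0: "u i \<noteq> 0" for i using nz by (simp add: u_def)
  have Au: "A$i$j = u i / u j" for i j
    using key[OF mult, of i j j0] rec[of j j0] by (simp add: u_def)
  have ct: "conj_transpose A = entry_cnj (entry_recip A)"
  proof -
    have r: "\<And>i j. cnj (A$j$i) = cnj (1 / A$i$j)" using rec by metis
    show ?thesis unfolding conj_transpose_def entry_cnj_def entry_recip_def vec_eq_iff
      by (simp only: vec_lambda_beta r simp_thms)
  qed
  have herm: "cmod (u i) = 1" if h: "conj_transpose A = A" for i
  proof -
    have "cnj (A$j0$i) = A$i$j0" using h by (simp add: conj_transpose_def vec_eq_iff)
    then have "cnj (1 / u i) = u i" using rec[of i j0] by (simp add: u_def)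
    then have "cmod (u i) = 1 / cmod (u i)" by (metis complex_mod_cnj norm_divide norm_one)
    then have "cmod (u i) * cmod (u i) = 1" using u0[of i] by (simp add: field_simps)
    then have "(cmod (u i) - 1) * (cmod (u i) + 1) = 0" by (simp add: algebra_simps)
    moreover have "cmod (u i) + 1 \<noteq> 0" using norm_ge_zero[of "u i"] by linarith
    ultimately show ?thesis by simp
  qed
  have ge: "op_norm A \<ge> real CARD('n)" by (rule norm_ge[OF u0 Au])
  have eq: "conj_transpose A = A \<longrightarrow> op_norm A = real CARD('n)"
  proof
    assume h: "conj_transpose A = A"
    show "op_norm A = real CARD('n)" using ge norm_le[OF herm[OF h] Au] by linarith
  qed
  have nr: "conj_transpose A = A \<longrightarrow> (\<forall>B. numerical_range (schur_prod A B) = numerical_range B)"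
    using nr_lemma[OF herm Au] by blast
  show ?thesis using nz ct diag_lemma[OF u0 Au] ge eq nr by blast
qed

end
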